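(* Let $A$ be a finite alphabet with $|A|=n$ and $L\subseteq A^*$. Then for every $m\in\mathbb N$ the tuple $(m,\dots,m)$ is componentwise dominated by the Parikh image of some word of $L$ if and only if there is an enumeration $b_1,\dots,b_n$ of $A$ such that $b_1^*b_2^*\cdots b_n^*\subseteq \downarrow L$.
   Context: The Parikh image of $w$ is the vector of the numbers of occurrences of each symbol of $A$ in $w$ (in a fixed order). $\downarrow L=\{u\mid \exists v\in L,\ u \text{ is a subsequence of } v\}$ is the downward closure of $L$. *)

theory Defs
  imports Main "HOL-Library.Sublist"
begin

definition parikh :: "'a list \<Rightarrow> 'a \<Rightarrow> nat" where
  "parikh w a = count_list w a"

definition down_closure :: "'a list set \<Rightarrow> 'a list set" where
  "down_closure L = {u. \<exists>v\<in>L. subseq u v}"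

text \<open>The language b_1^* b_2^* ... b_n^* for a list bs = [b_1,...,b_n].\<close>
definition star_concat :: "'a list \<Rightarrow> 'a list set" where
  "star_concat bs = {concat (map (\<lambda>(b, k). replicate k b) (zip bs ks)) | ks.
                      length ks = length bs}"

end

theory Submission
  imports Defs
begin

definition blocks :: "nat \<Rightarrow> 'a list \<Rightarrow> 'a list" where
  "blocks m bs = concat (map (\<lambda>b. replicate m b) bs)"

lemma count_subseq: "subseq u v \<Longrightarrow> count_list u a \<le> count_list v a"
  by (induction rule: list_emb.induct) auto

lemma rep_subseq: "m \<le> count_list xs b \<Longrightarrow> subseq (replicate m b) xs"
proof (induction xs arbitrary: m)
  case Nil then show ?case by simp
next
  case (Cons x xs)
  show ?case
  proof (cases "x = b")
    case True
    show ?thesis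
    proof (cases m)
      case 0 then show ?thesis by simp
    next
      case (Suc m') then show ?thesis using Cons True by auto
    qed
  next
    case False then show ?thesis using Cons by auto
  qed
qed

lemma rep_mono: assumes "k \<le> m" shows "subseq (replicate k b) (replicate m b)"
proof -
  have "count_list (replicate m b) b = m" by (induction m) auto
  then show ?thesis using assms by (intro rep_subseq) simp
qed

lemma count_take_Suc: "count_list (take (Suc j) w) a \<le> Suc (count_list (take j w) a)"
proof (cases "j < length w")
  case True then show ?thesis by (simp add: take_Suc_conv_app_nth)
next
  case False then show ?thesis by simp
qed

lemma blocks_count: "distinct bs \<Longrightarrow> a \<in> set bs \<Longrightarrow> count_list (blocks m bs) a = m"
proof (induction bs)
  case Nil then show ?case by simp
next
  case (Cons b bs)
  have c: "count_list (replicate m b) a = (if a = b then m else 0)"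
    by (induction m) auto
  show ?case using Cons c by (auto simp: blocks_def)
qed

lemma blocks_mono: "m \<le> m' \<Longrightarrow> subseq (blocks m bs) (blocks m' bs)"
  by (induction bs) (auto simp: blocks_def intro!: list_emb_append_mono rep_mono)

lemma key:
  assumes "finite S" "\<forall>a\<in>S. card S * m \<le> count_list w a"
  shows "\<exists>bs. distinct bs \<and> set bs = S \<and> subseq (blocks m bs) w"
  using assms
proof (induction "card S" arbitrary: S w)
  case 0
  then show ?case by (intro exI[of _ "[]"]) (auto simp: blocks_def)
next
  case (Suc c)
  define p where "p a = (LEAST k. m \<le> count_list (take k w) a)" for a
  have S0: "S \<noteq> {}" using Suc by auto
  have ex: "m \<le> count_list (take (length w) w) a" if "a \<in> S" for a
  proof -
    have "card S * m \<le> count_list w a" using Suc that by auto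
    moreover have "card S \<ge> 1" using Suc by simp
    ultimately have "m \<le> count_list w a"
      by (metis le_trans mult_1 mult_le_mono1)
    then show ?thesis by simp
  qed
  obtain b where b: "b \<in> S" "\<forall>a\<in>S. p b \<le> p a"
  proof -
    have "arg_min_on p S \<in> S" "\<not>(\<exists>x\<in>S. p x < p (arg_min_on p S))"
      using arg_min_if_finite[OF Suc(3) S0, of p] by auto
    then show ?thesis using that by (meson not_le)
  qed
  define k where "k = p b"
  have bk: "m \<le> count_list (take k w) b"
    unfolding k_def p_def using LeastI[of "\<lambda>k. m \<le> count_list (take k w) b", OF ex[OF b(1)]] .
  have le: "count_list (take k w) a \<le> m" if "a \<in> S" for a
  proof (cases k)
    case 0 then show ?thesis by simp
  next
    case (Suc j)
    have "j < p a" using b(2) that Suc k_def by auto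
    hence "\<not> m \<le> count_list (take j w) a" unfolding p_def by (rule not_less_Least)
    then show ?thesis using count_take_Suc[of j w a] Suc by simp
  qed
  let ?S' = "S - {b}"
  have cS: "c = card ?S'" using Suc b by simp
  have "\<forall>a\<in>?S'. card ?S' * m \<le> count_list (drop k w) a"
  proof
    fix a assume a: "a \<in> ?S'"
    have "count_list w a = count_list (take k w) a + count_list (drop k w) a"
      by (metis append_take_drop_id count_list_append)
    moreover have "card S * m \<le> count_list w a" using Suc a by auto
    moreover have "card S = Suc (card ?S')" using Suc b by simp
    ultimately show "card ?S' * m \<le> count_list (drop k w) a" using le[of a] a by auto
  qed
  then obtain bs where bs: "distinct bs" "set bs = ?S'" "subseq (blocks m bs) (drop k w)"
    using Suc(1)[OF cS] Suc(3) by blast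
  have "subseq (replicate m b @ blocks m bs) (take k w @ drop k w)"
    by (rule list_emb_append_mono[OF rep_subseq[OF bk] bs(3)])
  then have "subseq (blocks m (b # bs)) w" by (simp add: blocks_def)
  then show ?case using bs b by (intro exI[of _ "b # bs"]) auto
qed

lemma star_blocks:
  assumes "length ks = length bs"
  shows "subseq (concat (map (\<lambda>(b, k). replicate k b) (zip bs ks))) (blocks (sum_list ks) bs)"
proof -
  have "\<forall>m. (\<forall>k\<in>set ks. k \<le> m) \<longrightarrow>
     subseq (concat (map (\<lambda>(b, k). replicate k b) (zip bs ks))) (blocks m bs)"
    using assms
  proof (induction bs ks rule: list_induct2')
    case (4 b bs k ks)
    then show ?case by (auto simp: blocks_def intro!: list_emb_append_mono rep_mono)
  qed (auto simp: blocks_def)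
  moreover have "\<forall>k\<in>set ks. k \<le> sum_list ks" by (simp add: member_le_sum_list)
  ultimately show ?thesis by blast
qed

lemma blocks_star: "blocks m bs = concat (map (\<lambda>(b, k). replicate k b) (zip bs (replicate (length bs) m)))"
  by (induction bs) (auto simp: blocks_def)

theorem mainTheorem7:
  fixes A :: "'a set" and L :: "'a list set" and n :: nat
  assumes "finite A" and "card A = n" and "L \<subseteq> lists A"
  shows "(\<forall>m::nat. \<exists>w\<in>L. \<forall>a\<in>A. m \<le> parikh w a) \<longleftrightarrow>
         (\<exists>bs. distinct bs \<and> set bs = A \<and> length bs = n \<and>
               star_concat bs \<subseteq> down_closure L)"
proof
  assume H: "\<forall>m::nat. \<exists>w\<in>L. \<forall>a\<in>A. m \<le> parikh w a"
  define P where "P = {bs. distinct bs \<and> set bs = A}"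
  have finP: "finite P" unfolding P_def
  proof (rule finite_subset[OF _ finite_lists_length_eq[OF assms(1), of "card A"]])
    show "{bs. distinct bs \<and> set bs = A} \<subseteq> {xs. set xs \<subseteq> A \<and> length xs = card A}"
    proof
      fix xs assume "xs \<in> {bs. distinct bs \<and> set bs = A}"
      then have "distinct xs" "set xs = A" by auto
      then show "xs \<in> {xs. set xs \<subseteq> A \<and> length xs = card A}"
        using distinct_card[of xs] by simp
    qed
  qed
  define works where "works bs m = (\<exists>w\<in>L. subseq (blocks m bs) w)" for bs m
  have all: "\<exists>bs\<in>P. works bs m" for m
  proof -
    obtain w where w: "w \<in> L" "\<forall>a\<in>A. n * m \<le> parikh w a" using H by blast
    have "\<forall>a\<in>A. card A * m \<le> count_list w a" using w(2) assms(2) by (simp add: parikh_def)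
    from key[OF assms(1) this] obtain bs where "distinct bs" "set bs = A" "subseq (blocks m bs) w"
      by blast
    then show ?thesis using w unfolding P_def works_def by blast
  qed
  have mono: "works bs m' \<Longrightarrow> m \<le> m' \<Longrightarrow> works bs m" for bs m m'
    unfolding works_def using subseq_order.trans[OF blocks_mono[of m m' bs]] by blast
  have "\<exists>bs\<in>P. \<forall>m. works bs m"
  proof (rule ccontr)
    assume "\<not> ?thesis"
    then have "\<forall>bs\<in>P. \<exists>m. \<not> works bs m" by blast
    then obtain g where g: "\<forall>bs\<in>P. \<not> works bs (g bs)" by (rule bchoice[elim_format]) blast
    obtain bs where bs: "bs \<in> P" "works bs (sum g P)" using all by blast
    have "g bs \<le> sum g P" using finP bs(1) by (simp add: member_le_sum)
    then show False using mono[OF bs(2)] g bs(1) by blast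
  qed
  then obtain bs where bs: "bs \<in> P" "\<forall>m. works bs m" by blast
  have "star_concat bs \<subseteq> down_closure L"
  proof
    fix u assume "u \<in> star_concat bs"
    then obtain ks where ks: "length ks = length bs"
      "u = concat (map (\<lambda>(b, k). replicate k b) (zip bs ks))"
      unfolding star_concat_def by blast
    obtain w where "w \<in> L" and ww: "subseq (blocks (sum_list ks) bs) w"
      using bs(2) unfolding works_def by blast
    have "subseq u (blocks (sum_list ks) bs)" unfolding ks(2) by (rule star_blocks[OF ks(1)])
    then have "subseq u w" using ww by (rule subseq_order.trans)
    then show "u \<in> down_closure L" using \<open>w \<in> L\<close> unfolding down_closure_def by blast
  qed
  moreover have "length bs = n"
  proof -
    have "distinct bs" "set bs = A" using bs(1) unfolding P_def by auto
    then show ?thesis using distinct_card[of bs] assms(2) by simp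
  qed
  ultimately show "\<exists>bs. distinct bs \<and> set bs = A \<and> length bs = n \<and>
               star_concat bs \<subseteq> down_closure L" using bs(1) unfolding P_def by blast
next
  assume "\<exists>bs. distinct bs \<and> set bs = A \<and> length bs = n \<and>
               star_concat bs \<subseteq> down_closure L"
  then obtain bs where bs: "distinct bs" "set bs = A" "star_concat bs \<subseteq> down_closure L" by blast
  show "\<forall>m::nat. \<exists>w\<in>L. \<forall>a\<in>A. m \<le> parikh w a"
  proof
    fix m
    have "blocks m bs \<in> star_concat bs" unfolding star_concat_def blocks_star
      by (intro CollectI exI[of _ "replicate (length bs) m"]) simp
    then obtain v where v: "v \<in> L" "subseq (blocks m bs) v"
      using bs(3) unfolding down_closure_def by blast
    have "\<forall>a\<in>A. m \<le> parikh v a"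
    proof
      fix a assume "a \<in> A"
      then have "count_list (blocks m bs) a = m" using blocks_count[OF bs(1)] bs(2) by blast
      then show "m \<le> parikh v a" using count_subseq[OF v(2), of a] unfolding parikh_def by simp
    qed
    then show "\<exists>w\<in>L. \<forall>a\<in>A. m \<le> parikh w a" using v by blast
  qed
qed

end
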